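(* Let $\alpha,\beta,\gamma\in\mathbb{Z}_2^n$ and $a,b,c\in\mathbb{Z}_2$. Then (1) $\mathrm{cadp}_c(\alpha,\beta,\gamma)=\mathrm{cadp}_c(\beta,\alpha,\gamma)=\mathrm{cadp}_c(\alpha+2^{n-1},\beta+2^{n-1},\gamma)$; (2) $\mathrm{cadp}_c(\alpha,\beta,\gamma)=\mathrm{cadp}_c(-\alpha,\beta,\gamma)=\mathrm{cadp}_c(\alpha,-\beta,\gamma)$; (3) $\mathrm{cadp}_c(\alpha,\beta,\gamma)=\mathrm{cadp}_{c\oplus1}(\alpha,\beta,-\gamma)$ if $\gamma\neq0$; (4) $\mathrm{padp}_{a,b}(\alpha,\beta,\gamma)=\mathrm{padp}_{a,b}(\alpha,\beta,-\gamma)$; (5) $\mathrm{padp}_{a,b}(-\alpha,\beta,\gamma)=\mathrm{padp}_{a\oplus1,b}(\alpha,\beta,\gamma)$ if $\alpha\ne0$; (6) $\mathrm{padp}_{a,b}(\alpha,-\beta,\gamma)=\mathrm{padp}_{a,b\oplus1}(\alpha,\beta,\gamma)$ if $\beta\ne0$; (7) $\mathrm{padp}_{1,b}(0,\beta,\gamma)=\mathrm{padp}_{a,1}(\alpha,0,\gamma)=\mathrm{cadp}_1(\alpha,\beta,0)=0$.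
   Context: For $x\in\mathbb{Z}_2^n$, $x=(x_0,\dots,x_{n-1})$ is identified with the integer $\sum_i x_i2^{n-1-i}$ ($x_0$ most significant); $+$ and $-$ are modulo $2^n$. Indices $0,\dots,7$ are identified with $\mathbb{Z}_2^3$ via $(p_0,p_1,p_2)\leftrightarrow4p_0+2p_1+p_2$; $e_0,\dots,e_7$ are the standard basis row vectors of $\mathbb{Q}^8$. $A_0$ is $\frac14$ times the $8\times8$ matrix with rows $(4,0,0,1,0,1,1,0)$, $(0,0,0,1,0,1,0,0)$, $(0,0,0,1,0,0,1,0)$, $(0,0,0,1,0,0,0,0)$, $(0,0,0,0,0,1,1,0)$, $(0,0,0,0,0,1,0,0)$, $(0,0,0,0,0,0,1,0)$, $(0,\dots,0)$, and $(A_k)_{i,j}=(A_0)_{i\oplus k,j\oplus k}$. For $\alpha,\beta,\gamma\in\mathbb{Z}_2^n$ let $\omega_i=4\alpha_i+2\beta_i+\gamma_i$. With $L_0=(1,0,1,0,1,0,1,0)$, $L_1=(0,1,0,1,0,1,0,1)$, $L_{0,0}=(1,1,0,0,0,0,0,0)$, $L_{0,1}=(0,0,1,1,0,0,0,0)$, $L_{1,0}=(0,0,0,0,1,1,0,0)$, $L_{1,1}=(0,0,0,0,0,0,1,1)$, define $\mathrm{cadp}_c(\alpha,\beta,\gamma)=L_cA_{\omega_0}\cdots A_{\omega_{n-1}}e_0^T$ and $\mathrm{padp}_{a,b}(\alpha,\beta,\gamma)=L_{a,b}A_{\omega_0}\cdots A_{\omega_{n-1}}e_0^T$. *)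

theory Defs
  imports Main "HOL.Rat"
begin

text \<open>Elements of Z_2^n are represented as naturals x < 2^n; bit i of x
 (x_0 most significant) is bit (n-1-i) of the integer. Elements of Z_2 are naturals 0/1.\<close>

definition xbit :: "nat \<Rightarrow> nat \<Rightarrow> nat \<Rightarrow> nat" where
  "xbit n x i = (if bit x (n - 1 - i) then 1 else 0)"

definition zneg :: "nat \<Rightarrow> nat \<Rightarrow> nat" where
  "zneg n x = (2^n - x) mod 2^n"

definition zadd :: "nat \<Rightarrow> nat \<Rightarrow> nat \<Rightarrow> nat" where
  "zadd n x y = (x + y) mod 2^n"

definition A0list :: "rat list list" where
  "A0list = map (map (\<lambda>k. of_int k / 4))
    [[4,0,0,1,0,1,1,0],
     [0,0,0,1,0,1,0,0],
     [0,0,0,1,0,0,1,0],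
     [0,0,0,1,0,0,0,0],
     [0,0,0,0,0,1,1,0],
     [0,0,0,0,0,1,0,0],
     [0,0,0,0,0,0,1,0],
     [0,0,0,0,0,0,0,0]]"

definition A0 :: "nat \<Rightarrow> nat \<Rightarrow> rat" where
  "A0 i j = A0list ! i ! j"

definition Amat :: "nat \<Rightarrow> nat \<Rightarrow> nat \<Rightarrow> rat" where
  "Amat k i j = A0 (xor i k) (xor j k)"

definition matvec :: "(nat \<Rightarrow> nat \<Rightarrow> rat) \<Rightarrow> (nat \<Rightarrow> rat) \<Rightarrow> nat \<Rightarrow> rat" where
  "matvec M v = (\<lambda>i. \<Sum>j<8. M i j * v j)"

definition e0 :: "nat \<Rightarrow> rat" where
  "e0 = (\<lambda>j. if j = 0 then 1 else 0)"

definition omega :: "nat \<Rightarrow> nat \<Rightarrow> nat \<Rightarrow> nat \<Rightarrow> nat \<Rightarrow> nat" where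
  "omega n \<alpha> \<beta> \<gamma> i = 4 * xbit n \<alpha> i + 2 * xbit n \<beta> i + xbit n \<gamma> i"

definition prodvec :: "nat \<Rightarrow> nat \<Rightarrow> nat \<Rightarrow> nat \<Rightarrow> nat \<Rightarrow> rat" where
  "prodvec n \<alpha> \<beta> \<gamma> =
     foldr (\<lambda>k v. matvec (Amat k) v) (map (omega n \<alpha> \<beta> \<gamma>) [0..<n]) e0"

definition Lc :: "nat \<Rightarrow> rat list" where
  "Lc c = (if c = 0 then [1,0,1,0,1,0,1,0] else [0,1,0,1,0,1,0,1])"

definition Lab :: "nat \<Rightarrow> nat \<Rightarrow> rat list" where
  "Lab a b = (if a = 0 then (if b = 0 then [1,1,0,0,0,0,0,0] else [0,0,1,1,0,0,0,0])
              else (if b = 0 then [0,0,0,0,1,1,0,0] else [0,0,0,0,0,0,1,1]))"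

definition cadp :: "nat \<Rightarrow> nat \<Rightarrow> nat \<Rightarrow> nat \<Rightarrow> nat \<Rightarrow> rat" where
  "cadp n c \<alpha> \<beta> \<gamma> = (\<Sum>j<8. Lc c ! j * prodvec n \<alpha> \<beta> \<gamma> j)"

definition padp :: "nat \<Rightarrow> nat \<Rightarrow> nat \<Rightarrow> nat \<Rightarrow> nat \<Rightarrow> nat \<Rightarrow> rat" where
  "padp n a b \<alpha> \<beta> \<gamma> = (\<Sum>j<8. Lab a b ! j * prodvec n \<alpha> \<beta> \<gamma> j)"

end

theory Submission imports Defs begin
declare One_nat_def [simp del]
lemma sucs: "Suc 0 = 1" "Suc 1 = 2" "Suc 2 = 3" "Suc 3 = 4" "Suc 4 = 5" "Suc 5 = 6" "Suc 6 = 7" "Suc 7 = 8"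
  by simp_all
lemma sum8: "(\<Sum>j<8. f j) = f 0 + f 1 + f 2 + f 3 + f 4 + f 5 + f 6 + (f (7::nat)::rat)"
  by (simp add: numeral_eq_Suc lessThan_Suc One_nat_def)
declare sucs[simp]
lemma less8: "(i::nat) < 8 \<longleftrightarrow> i = 0 \<or> i = 1 \<or> i = 2 \<or> i = 3 \<or> i = 4 \<or> i = 5 \<or> i = 6 \<or> i = 7"
  by auto
lemma less2: "(i::nat) < 2 \<longleftrightarrow> i = 0 \<or> i = 1" by auto
lemma T_0_0[simp]: "matvec (Amat 0) v 0 = v 0 + v 3 / 4 + v 5 / 4 + v 6 / 4"
  by (simp add: matvec_def Amat_def A0_def A0list_def sum8)
lemma T_0_1[simp]: "matvec (Amat 0) v 1 = v 3 / 4 + v 5 / 4"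
  by (simp add: matvec_def Amat_def A0_def A0list_def sum8)
lemma T_0_2[simp]: "matvec (Amat 0) v 2 = v 3 / 4 + v 6 / 4"
  by (simp add: matvec_def Amat_def A0_def A0list_def sum8)
lemma T_0_3[simp]: "matvec (Amat 0) v 3 = v 3 / 4"
  by (simp add: matvec_def Amat_def A0_def A0list_def sum8)
lemma T_0_4[simp]: "matvec (Amat 0) v 4 = v 5 / 4 + v 6 / 4"
  by (simp add: matvec_def Amat_def A0_def A0list_def sum8)
lemma T_0_5[simp]: "matvec (Amat 0) v 5 = v 5 / 4"
  by (simp add: matvec_def Amat_def A0_def A0list_def sum8)
lemma T_0_6[simp]: "matvec (Amat 0) v 6 = v 6 / 4"
  by (simp add: matvec_def Amat_def A0_def A0list_def sum8)
lemma T_0_7[simp]: "matvec (Amat 0) v 7 = 0"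
  by (simp add: matvec_def Amat_def A0_def A0list_def sum8)
lemma T_1_0[simp]: "matvec (Amat 1) v 0 = v 2 / 4 + v 4 / 4"
  by (simp add: matvec_def Amat_def A0_def A0list_def sum8)
lemma T_1_1[simp]: "matvec (Amat 1) v 1 = v 1 + v 2 / 4 + v 4 / 4 + v 7 / 4"
  by (simp add: matvec_def Amat_def A0_def A0list_def sum8)
lemma T_1_2[simp]: "matvec (Amat 1) v 2 = v 2 / 4"
  by (simp add: matvec_def Amat_def A0_def A0list_def sum8)
lemma T_1_3[simp]: "matvec (Amat 1) v 3 = v 2 / 4 + v 7 / 4"
  by (simp add: matvec_def Amat_def A0_def A0list_def sum8)
lemma T_1_4[simp]: "matvec (Amat 1) v 4 = v 4 / 4"
  by (simp add: matvec_def Amat_def A0_def A0list_def sum8)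
lemma T_1_5[simp]: "matvec (Amat 1) v 5 = v 4 / 4 + v 7 / 4"
  by (simp add: matvec_def Amat_def A0_def A0list_def sum8)
lemma T_1_6[simp]: "matvec (Amat 1) v 6 = 0"
  by (simp add: matvec_def Amat_def A0_def A0list_def sum8)
lemma T_1_7[simp]: "matvec (Amat 1) v 7 = v 7 / 4"
  by (simp add: matvec_def Amat_def A0_def A0list_def sum8)
lemma T_2_0[simp]: "matvec (Amat 2) v 0 = v 1 / 4 + v 4 / 4"
  by (simp add: matvec_def Amat_def A0_def A0list_def sum8)
lemma T_2_1[simp]: "matvec (Amat 2) v 1 = v 1 / 4"
  by (simp add: matvec_def Amat_def A0_def A0list_def sum8)
lemma T_2_2[simp]: "matvec (Amat 2) v 2 = v 1 / 4 + v 2 + v 4 / 4 + v 7 / 4"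
  by (simp add: matvec_def Amat_def A0_def A0list_def sum8)
lemma T_2_3[simp]: "matvec (Amat 2) v 3 = v 1 / 4 + v 7 / 4"
  by (simp add: matvec_def Amat_def A0_def A0list_def sum8)
lemma T_2_4[simp]: "matvec (Amat 2) v 4 = v 4 / 4"
  by (simp add: matvec_def Amat_def A0_def A0list_def sum8)
lemma T_2_5[simp]: "matvec (Amat 2) v 5 = 0"
  by (simp add: matvec_def Amat_def A0_def A0list_def sum8)
lemma T_2_6[simp]: "matvec (Amat 2) v 6 = v 4 / 4 + v 7 / 4"
  by (simp add: matvec_def Amat_def A0_def A0list_def sum8)
lemma T_2_7[simp]: "matvec (Amat 2) v 7 = v 7 / 4"
  by (simp add: matvec_def Amat_def A0_def A0list_def sum8)
lemma T_3_0[simp]: "matvec (Amat 3) v 0 = v 0 / 4"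
  by (simp add: matvec_def Amat_def A0_def A0list_def sum8)
lemma T_3_1[simp]: "matvec (Amat 3) v 1 = v 0 / 4 + v 5 / 4"
  by (simp add: matvec_def Amat_def A0_def A0list_def sum8)
lemma T_3_2[simp]: "matvec (Amat 3) v 2 = v 0 / 4 + v 6 / 4"
  by (simp add: matvec_def Amat_def A0_def A0list_def sum8)
lemma T_3_3[simp]: "matvec (Amat 3) v 3 = v 0 / 4 + v 3 + v 5 / 4 + v 6 / 4"
  by (simp add: matvec_def Amat_def A0_def A0list_def sum8)
lemma T_3_4[simp]: "matvec (Amat 3) v 4 = 0"
  by (simp add: matvec_def Amat_def A0_def A0list_def sum8)
lemma T_3_5[simp]: "matvec (Amat 3) v 5 = v 5 / 4"
  by (simp add: matvec_def Amat_def A0_def A0list_def sum8)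
lemma T_3_6[simp]: "matvec (Amat 3) v 6 = v 6 / 4"
  by (simp add: matvec_def Amat_def A0_def A0list_def sum8)
lemma T_3_7[simp]: "matvec (Amat 3) v 7 = v 5 / 4 + v 6 / 4"
  by (simp add: matvec_def Amat_def A0_def A0list_def sum8)
lemma T_4_0[simp]: "matvec (Amat 4) v 0 = v 1 / 4 + v 2 / 4"
  by (simp add: matvec_def Amat_def A0_def A0list_def sum8)
lemma T_4_1[simp]: "matvec (Amat 4) v 1 = v 1 / 4"
  by (simp add: matvec_def Amat_def A0_def A0list_def sum8)
lemma T_4_2[simp]: "matvec (Amat 4) v 2 = v 2 / 4"
  by (simp add: matvec_def Amat_def A0_def A0list_def sum8)
lemma T_4_3[simp]: "matvec (Amat 4) v 3 = 0"
  by (simp add: matvec_def Amat_def A0_def A0list_def sum8)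
lemma T_4_4[simp]: "matvec (Amat 4) v 4 = v 1 / 4 + v 2 / 4 + v 4 + v 7 / 4"
  by (simp add: matvec_def Amat_def A0_def A0list_def sum8)
lemma T_4_5[simp]: "matvec (Amat 4) v 5 = v 1 / 4 + v 7 / 4"
  by (simp add: matvec_def Amat_def A0_def A0list_def sum8)
lemma T_4_6[simp]: "matvec (Amat 4) v 6 = v 2 / 4 + v 7 / 4"
  by (simp add: matvec_def Amat_def A0_def A0list_def sum8)
lemma T_4_7[simp]: "matvec (Amat 4) v 7 = v 7 / 4"
  by (simp add: matvec_def Amat_def A0_def A0list_def sum8)
lemma T_5_0[simp]: "matvec (Amat 5) v 0 = v 0 / 4"
  by (simp add: matvec_def Amat_def A0_def A0list_def sum8)
lemma T_5_1[simp]: "matvec (Amat 5) v 1 = v 0 / 4 + v 3 / 4"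
  by (simp add: matvec_def Amat_def A0_def A0list_def sum8)
lemma T_5_2[simp]: "matvec (Amat 5) v 2 = 0"
  by (simp add: matvec_def Amat_def A0_def A0list_def sum8)
lemma T_5_3[simp]: "matvec (Amat 5) v 3 = v 3 / 4"
  by (simp add: matvec_def Amat_def A0_def A0list_def sum8)
lemma T_5_4[simp]: "matvec (Amat 5) v 4 = v 0 / 4 + v 6 / 4"
  by (simp add: matvec_def Amat_def A0_def A0list_def sum8)
lemma T_5_5[simp]: "matvec (Amat 5) v 5 = v 0 / 4 + v 3 / 4 + v 5 + v 6 / 4"
  by (simp add: matvec_def Amat_def A0_def A0list_def sum8)
lemma T_5_6[simp]: "matvec (Amat 5) v 6 = v 6 / 4"
  by (simp add: matvec_def Amat_def A0_def A0list_def sum8)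
lemma T_5_7[simp]: "matvec (Amat 5) v 7 = v 3 / 4 + v 6 / 4"
  by (simp add: matvec_def Amat_def A0_def A0list_def sum8)
lemma T_6_0[simp]: "matvec (Amat 6) v 0 = v 0 / 4"
  by (simp add: matvec_def Amat_def A0_def A0list_def sum8)
lemma T_6_1[simp]: "matvec (Amat 6) v 1 = 0"
  by (simp add: matvec_def Amat_def A0_def A0list_def sum8)
lemma T_6_2[simp]: "matvec (Amat 6) v 2 = v 0 / 4 + v 3 / 4"
  by (simp add: matvec_def Amat_def A0_def A0list_def sum8)
lemma T_6_3[simp]: "matvec (Amat 6) v 3 = v 3 / 4"
  by (simp add: matvec_def Amat_def A0_def A0list_def sum8)
lemma T_6_4[simp]: "matvec (Amat 6) v 4 = v 0 / 4 + v 5 / 4"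
  by (simp add: matvec_def Amat_def A0_def A0list_def sum8)
lemma T_6_5[simp]: "matvec (Amat 6) v 5 = v 5 / 4"
  by (simp add: matvec_def Amat_def A0_def A0list_def sum8)
lemma T_6_6[simp]: "matvec (Amat 6) v 6 = v 0 / 4 + v 3 / 4 + v 5 / 4 + v 6"
  by (simp add: matvec_def Amat_def A0_def A0list_def sum8)
lemma T_6_7[simp]: "matvec (Amat 6) v 7 = v 3 / 4 + v 5 / 4"
  by (simp add: matvec_def Amat_def A0_def A0list_def sum8)
lemma T_7_0[simp]: "matvec (Amat 7) v 0 = 0"
  by (simp add: matvec_def Amat_def A0_def A0list_def sum8)
lemma T_7_1[simp]: "matvec (Amat 7) v 1 = v 1 / 4"
  by (simp add: matvec_def Amat_def A0_def A0list_def sum8)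
lemma T_7_2[simp]: "matvec (Amat 7) v 2 = v 2 / 4"
  by (simp add: matvec_def Amat_def A0_def A0list_def sum8)
lemma T_7_3[simp]: "matvec (Amat 7) v 3 = v 1 / 4 + v 2 / 4"
  by (simp add: matvec_def Amat_def A0_def A0list_def sum8)
lemma T_7_4[simp]: "matvec (Amat 7) v 4 = v 4 / 4"
  by (simp add: matvec_def Amat_def A0_def A0list_def sum8)
lemma T_7_5[simp]: "matvec (Amat 7) v 5 = v 1 / 4 + v 4 / 4"
  by (simp add: matvec_def Amat_def A0_def A0list_def sum8)
lemma T_7_6[simp]: "matvec (Amat 7) v 6 = v 2 / 4 + v 4 / 4"
  by (simp add: matvec_def Amat_def A0_def A0list_def sum8)
lemma T_7_7[simp]: "matvec (Amat 7) v 7 = v 1 / 4 + v 2 / 4 + v 4 / 4 + v 7"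
  by (simp add: matvec_def Amat_def A0_def A0list_def sum8)
lemma all8: "(\<forall>k<8. Q k) \<longleftrightarrow> Q 0 \<and> Q 1 \<and> Q 2 \<and> Q 3 \<and> Q 4 \<and> Q 5 \<and> Q 6 \<and> Q (7::nat)"
proof
  assume "\<forall>k<8. Q k" thus "Q 0 \<and> Q 1 \<and> Q 2 \<and> Q 3 \<and> Q 4 \<and> Q 5 \<and> Q 6 \<and> Q (7::nat)" by simp
next
  assume H: "Q 0 \<and> Q 1 \<and> Q 2 \<and> Q 3 \<and> Q 4 \<and> Q 5 \<and> Q 6 \<and> Q (7::nat)"
  show "\<forall>k<8. Q k"
  proof (intro allI impI)
    fix k :: nat assume "k < 8"
    then have "k = 0 \<or> k = 1 \<or> k = 2 \<or> k = 3 \<or> k = 4 \<or> k = 5 \<or> k = 6 \<or> k = 7" by (simp only: less8)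
    then show "Q k" using H by (elim disjE) simp_all
  qed
qed

definition fl :: "nat \<Rightarrow> nat \<Rightarrow> nat" where "fl t j = (if odd (j div t) then j - t else j + t)"
definition S :: "nat \<Rightarrow> (nat \<Rightarrow> rat) \<Rightarrow> bool" where "S t u = (\<forall>j<8. odd (j div t) \<longrightarrow> u j = 0)"
definition sg :: "nat \<Rightarrow> nat" where "sg j = 4*((j div 2) mod 2) + 2*((j div 4) mod 2) + j mod 2"

lemma MF: assumes "t = 1 \<or> t = 2 \<or> t = 4" "k<8" "i<8"
  shows "matvec (Amat (fl t k)) (\<lambda>j. v (fl t j)) i = matvec (Amat k) v (fl t i)"
proof -
  have "\<forall>t\<in>{1,2,4::nat}. \<forall>k<8. \<forall>i<8. matvec (Amat (fl t k)) (\<lambda>j. v (fl t j)) i = matvec (Amat k) v (fl t i)"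
    unfolding all8 by (simp add: fl_def)
  then show ?thesis using assms by blast
qed

lemma MS: assumes "k<8" "i<8"
  shows "matvec (Amat (sg k)) (\<lambda>j. v (sg j)) i = matvec (Amat k) v (sg i)"
proof -
  have "\<forall>k<8. \<forall>i<8. matvec (Amat (sg k)) (\<lambda>j. v (sg j)) i = matvec (Amat k) v (sg i)"
    unfolding all8 by (simp add: sg_def)
  then show ?thesis using assms by blast
qed

lemma fl_lt: "t = 1 \<or> t = 2 \<or> t = 4 \<Longrightarrow> i < 8 \<Longrightarrow> fl t i < 8"
proof -
  have "\<forall>t\<in>{1,2,4::nat}. \<forall>i<8. fl t i < 8" unfolding all8 by (simp add: fl_def)
  then show "t = 1 \<or> t = 2 \<or> t = 4 \<Longrightarrow> i < 8 \<Longrightarrow> fl t i < 8" by blast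
qed

lemma sg_lt: "i < 8 \<Longrightarrow> sg i < 8"
proof -
  have "\<forall>i<8. sg i < 8" unfolding all8 by (simp add: sg_def)
  then show "i < 8 \<Longrightarrow> sg i < 8" by blast
qed

lemma MZ: assumes "S t u" "t = 1 \<or> t = 2 \<or> t = 4" "k<8" "\<not> odd (k div t)"
  shows "S t (matvec (Amat k) u)"
  using assms(2)
proof (elim disjE)
  assume [simp]: "t = 1"
  have "u 1 = 0" "u 3 = 0" "u 5 = 0" "u 7 = 0" using assms(1) by (simp_all add: S_def)
  moreover have "\<forall>k<8. \<not> odd (k div 1) \<longrightarrow> (\<forall>i<8. odd (i div 1) \<longrightarrow> matvec (Amat k) u i = 0)"
    using calculation unfolding all8 by simp
  ultimately show ?thesis using assms unfolding S_def by simp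
next
  assume [simp]: "t = 2"
  have "u 2 = 0" "u 3 = 0" "u 6 = 0" "u 7 = 0" using assms(1) by (simp_all add: S_def)
  moreover have "\<forall>k<8. \<not> odd (k div 2) \<longrightarrow> (\<forall>i<8. odd (i div 2) \<longrightarrow> matvec (Amat k) u i = 0)"
    using calculation unfolding all8 by simp
  ultimately show ?thesis using assms unfolding S_def by simp
next
  assume [simp]: "t = 4"
  have "u 4 = 0" "u 5 = 0" "u 6 = 0" "u 7 = 0" using assms(1) by (simp_all add: S_def)
  moreover have "\<forall>k<8. \<not> odd (k div 4) \<longrightarrow> (\<forall>i<8. odd (i div 4) \<longrightarrow> matvec (Amat k) u i = 0)"
    using calculation unfolding all8 by simp
  ultimately show ?thesis using assms unfolding S_def by simp
qed

lemma MI: assumes "S t u" "t = 1 \<or> t = 2 \<or> t = 4" "k<8" "odd (k div t)" "i < 8"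
  shows "matvec (Amat k) u (fl t i) = matvec (Amat k) u i"
  using assms(2)
proof (elim disjE)
  assume [simp]: "t = 1"
  have "u 1 = 0" "u 3 = 0" "u 5 = 0" "u 7 = 0" using assms(1) by (simp_all add: S_def)
  moreover have "\<forall>k<8. odd (k div 1) \<longrightarrow> (\<forall>i<8. matvec (Amat k) u (fl 1 i) = matvec (Amat k) u i)"
    using calculation unfolding all8 by (simp add: fl_def)
  ultimately show ?thesis using assms by simp
next
  assume [simp]: "t = 2"
  have "u 2 = 0" "u 3 = 0" "u 6 = 0" "u 7 = 0" using assms(1) by (simp_all add: S_def)
  moreover have "\<forall>k<8. odd (k div 2) \<longrightarrow> (\<forall>i<8. matvec (Amat k) u (fl 2 i) = matvec (Amat k) u i)"
    using calculation unfolding all8 by (simp add: fl_def)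
  ultimately show ?thesis using assms by simp
next
  assume [simp]: "t = 4"
  have "u 4 = 0" "u 5 = 0" "u 6 = 0" "u 7 = 0" using assms(1) by (simp_all add: S_def)
  moreover have "\<forall>k<8. odd (k div 4) \<longrightarrow> (\<forall>i<8. matvec (Amat k) u (fl 4 i) = matvec (Amat k) u i)"
    using calculation unfolding all8 by (simp add: fl_def)
  ultimately show ?thesis using assms by simp
qed

lemma M6: assumes "k<8" "c<2"
  shows "(\<Sum>i<8. Lc c ! i * matvec (Amat (fl 2 (fl 4 k))) w i) = (\<Sum>i<8. Lc c ! i * matvec (Amat k) w i)"
proof -
  have "\<forall>c<2. \<forall>k<8. (\<Sum>i<8. Lc c ! i * matvec (Amat (fl 2 (fl 4 k))) w i) = (\<Sum>i<8. Lc c ! i * matvec (Amat k) w i)"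
    unfolding all8 less2 by (simp add: fl_def sum8 Lc_def)
  then show ?thesis using assms by blast
qed


lemma VF: assumes "a<2" "b<2" "c<2"
  shows "(\<Sum>i<8. Lc c ! i * w (fl 4 i)) = (\<Sum>i<8. Lc c ! i * w i)"
    "(\<Sum>i<8. Lc c ! i * w (fl 2 i)) = (\<Sum>i<8. Lc c ! i * w i)"
    "(\<Sum>i<8. Lc (xor c 1) ! i * w (fl 1 i)) = (\<Sum>i<8. Lc c ! i * w i)"
    "(\<Sum>i<8. Lc c ! i * w (sg i)) = (\<Sum>i<8. Lc c ! i * w i)"
    "(\<Sum>i<8. Lab a b ! i * w (fl 1 i)) = (\<Sum>i<8. Lab a b ! i * w i)"
    "(\<Sum>i<8. Lab a b ! i * w (fl 4 i)) = (\<Sum>i<8. Lab (xor a 1) b ! i * w i)"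
    "(\<Sum>i<8. Lab a b ! i * w (fl 2 i)) = (\<Sum>i<8. Lab a (xor b 1) ! i * w i)"
  using assms unfolding less2 by (auto simp: sum8 Lc_def Lab_def fl_def sg_def)

lemma VZ: 
  shows "S 4 w \<Longrightarrow> (\<Sum>i<8. Lab 1 b ! i * w i) = 0"
    "S 2 w \<Longrightarrow> (\<Sum>i<8. Lab a 1 ! i * w i) = 0"
    "S 1 w \<Longrightarrow> (\<Sum>i<8. Lc 1 ! i * w i) = 0"
  by (auto simp: sum8 Lc_def Lab_def S_def)

definition lt :: "nat \<Rightarrow> nat \<Rightarrow> nat \<Rightarrow> nat" where
  "lt x y z = 4*(x mod 2) + 2*(y mod 2) + z mod 2"

fun G :: "nat \<Rightarrow> nat \<Rightarrow> nat \<Rightarrow> nat \<Rightarrow> (nat \<Rightarrow> rat) \<Rightarrow> nat \<Rightarrow> rat" where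
  "G 0 x y z u = u"
| "G (Suc n) x y z u = G n (x div 2) (y div 2) (z div 2) (matvec (Amat (lt x y z)) u)"

lemma lt_lt: "lt x y z < 8" unfolding lt_def by (simp add: less2 mod2_eq_if)

lemma lt_fl:
  "lt (1 - x mod 2) y z = fl 4 (lt x y z)"
  "lt x (1 - y mod 2) z = fl 2 (lt x y z)"
  "lt x y (1 - z mod 2) = fl 1 (lt x y z)"
  "lt y x z = sg (lt x y z)"
  "lt (1 - x mod 2) (1 - y mod 2) z = fl 2 (fl 4 (lt x y z))"
  unfolding lt_def fl_def sg_def by (auto simp: mod2_eq_if)

lemma matvec_cong: "(\<And>j. j < 8 \<Longrightarrow> u j = v j) \<Longrightarrow> matvec M u = matvec M v"
  unfolding matvec_def by (intro ext sum.cong) auto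

lemma Gcong: "(\<And>j. j < 8 \<Longrightarrow> u j = v j) \<Longrightarrow> i < 8 \<Longrightarrow> G n x y z u i = G n x y z v i"
proof (induction n arbitrary: x y z u v)
  case 0 then show ?case by simp
next
  case (Suc n)
  have "matvec (Amat (lt x y z)) u = matvec (Amat (lt x y z)) v" by (rule matvec_cong) (use Suc in auto)
  then show ?case by simp
qed


lemma AR0: "(x::nat) = 2*q + r \<Longrightarrow> r < 2 \<Longrightarrow> q < P \<Longrightarrow> 2*P - 1 - x = 2*(P - 1 - q) + (1 - r)"
  by arith

lemma AR1: "(x::nat) < 2^Suc n \<Longrightarrow> 2^Suc n - 1 - x = 2*(2^n - 1 - x div 2) + (1 - x mod 2)"
proof -
  assume a: "x < 2^Suc n"
  have "x = 2*(x div 2) + x mod 2" by simp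
  moreover have "x mod 2 < 2" by simp
  moreover have "x div 2 < 2^n" using a by auto
  ultimately have "2*2^n - 1 - x = 2*(2^n - 1 - x div 2) + (1 - x mod 2)" by (rule AR0)
  then show ?thesis by simp
qed

lemma AR2: "(B::nat) < 2 \<Longrightarrow> (2*A+B) div 2 = A \<and> (2*A+B) mod 2 = B" by simp

lemma Zeven: "even x \<Longrightarrow> 0 < x \<Longrightarrow> x < 2^Suc n \<Longrightarrow> zneg (Suc n) x = 2 * zneg n (x div 2) + 0"
proof -
  assume a: "even x" "0 < x" "x < 2^Suc n"
  have h: "0 < x div 2" "x div 2 < 2^n" using a by auto
  have "zneg (Suc n) x = 2^Suc n - x" unfolding zneg_def using a by simp
  moreover have "zneg n (x div 2) = 2^n - x div 2" unfolding zneg_def using h by simp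
  moreover have "x = 2 * (x div 2)" using a by simp
  ultimately show ?thesis by simp
qed

lemma Zodd: "odd x \<Longrightarrow> x < 2^Suc n \<Longrightarrow> zneg (Suc n) x = 2 * (2^n - 1 - x div 2) + 1"
proof -
  assume a: "odd x" "x < 2^Suc n"
  have "zneg (Suc n) x = 2^Suc n - x" unfolding zneg_def using a by (cases "x = 0") simp_all
  moreover have "x = 2*(x div 2) + 1" using a(1) by (rule odd_two_times_div_two_succ[symmetric])
  moreover have "x div 2 < 2^n" using a by auto
  ultimately show ?thesis by simp
qed

lemma lt_cong: "x mod 2 = x' mod 2 \<Longrightarrow> y mod 2 = y' mod 2 \<Longrightarrow> z mod 2 = z' mod 2 \<Longrightarrow> lt x y z = lt x' y' z'"
  unfolding lt_def by simp

lemma CA4: "x < 2^n \<Longrightarrow> i < 8 \<Longrightarrow> G n (2^n - 1 - x) y z (\<lambda>j. u (fl 4 j)) i = G n x y z u (fl 4 i)"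
proof (induction n arbitrary: x y z u i)
  case 0 then show ?case by simp
next
  case (Suc n)
  define x' where "x' = 2^Suc n - 1 - x"
  have e: "x' = 2*(2^n-1-x div 2) + (1 - x mod 2)" using AR1 Suc.prems x'_def by blast
  have d: "x' div 2 = 2^n - 1 - x div 2" "x' mod 2 = 1 - x mod 2" using AR2[of "1 - x mod 2"] e by auto
  have mm: "(1 - x mod 2) mod 2 = 1 - x mod 2" by (cases "even x") (auto simp: odd_iff_mod_2_eq_one)
  have l: "lt x' y z = fl 4 (lt x y z)" using lt_fl(1)[of x y z] lt_cong[of x' "1 - x mod 2" y y z z] d mm by simp
  define w where "w = matvec (Amat (lt x y z)) u"
  have m: "matvec (Amat (lt x' y z)) (\<lambda>j. u (fl 4 j)) j = w (fl 4 j)" if "j < 8" for j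
    unfolding l w_def by (rule MF) (use that lt_lt in auto)
  have "G (Suc n) x' y z (\<lambda>j. u (fl 4 j)) i = G n (x' div 2) (y div 2) (z div 2) (matvec (Amat (lt x' y z)) (\<lambda>j. u (fl 4 j))) i" by simp
  also have "\<dots> = G n (2^n - 1 - x div 2) (y div 2) (z div 2) (\<lambda>j. w (fl 4 j)) i"
    unfolding d(1) by (rule Gcong) (use m Suc.prems in auto)
  also have "\<dots> = G n (x div 2) (y div 2) (z div 2) w (fl 4 i)"
    by (rule Suc.IH) (use Suc.prems in auto)
  also have "\<dots> = G (Suc n) x y z u (fl 4 i)" by (simp add: w_def)
  finally show ?case by (simp add: x'_def)
qed

lemma CA2: "y < 2^n \<Longrightarrow> i < 8 \<Longrightarrow> G n x (2^n - 1 - y) z (\<lambda>j. u (fl 2 j)) i = G n x y z u (fl 2 i)"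
proof (induction n arbitrary: x y z u i)
  case 0 then show ?case by simp
next
  case (Suc n)
  define y' where "y' = 2^Suc n - 1 - y"
  have e: "y' = 2*(2^n-1-y div 2) + (1 - y mod 2)" using AR1 Suc.prems y'_def by blast
  have d: "y' div 2 = 2^n - 1 - y div 2" "y' mod 2 = 1 - y mod 2" using AR2[of "1 - y mod 2"] e by auto
  have mm: "(1 - y mod 2) mod 2 = 1 - y mod 2" by (cases "even y") (auto simp: odd_iff_mod_2_eq_one)
  have l: "lt x y' z = fl 2 (lt x y z)" using lt_fl(2)[of x y z] lt_cong[of x x y' "1 - y mod 2" z z] d mm by simp
  define w where "w = matvec (Amat (lt x y z)) u"
  have m: "matvec (Amat (lt x y' z)) (\<lambda>j. u (fl 2 j)) j = w (fl 2 j)" if "j < 8" for j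
    unfolding l w_def by (rule MF) (use that lt_lt in auto)
  have "G (Suc n) x y' z (\<lambda>j. u (fl 2 j)) i = G n (x div 2) (y' div 2) (z div 2) (matvec (Amat (lt x y' z)) (\<lambda>j. u (fl 2 j))) i" by simp
  also have "\<dots> = G n (x div 2) (2^n - 1 - y div 2) (z div 2) (\<lambda>j. w (fl 2 j)) i"
    unfolding d(1) by (rule Gcong) (use m Suc.prems in auto)
  also have "\<dots> = G n (x div 2) (y div 2) (z div 2) w (fl 2 i)"
    by (rule Suc.IH) (use Suc.prems in auto)
  also have "\<dots> = G (Suc n) x y z u (fl 2 i)" by (simp add: w_def)
  finally show ?case by (simp add: y'_def)
qed

lemma CA1: "z < 2^n \<Longrightarrow> i < 8 \<Longrightarrow> G n x y (2^n - 1 - z) (\<lambda>j. u (fl 1 j)) i = G n x y z u (fl 1 i)"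
proof (induction n arbitrary: x y z u i)
  case 0 then show ?case by simp
next
  case (Suc n)
  define z' where "z' = 2^Suc n - 1 - z"
  have e: "z' = 2*(2^n-1-z div 2) + (1 - z mod 2)" using AR1 Suc.prems z'_def by blast
  have d: "z' div 2 = 2^n - 1 - z div 2" "z' mod 2 = 1 - z mod 2" using AR2[of "1 - z mod 2"] e by auto
  have mm: "(1 - z mod 2) mod 2 = 1 - z mod 2" by (cases "even z") (auto simp: odd_iff_mod_2_eq_one)
  have l: "lt x y z' = fl 1 (lt x y z)" using lt_fl(3)[of x y z] lt_cong[of x x y y z' "1 - z mod 2"] d mm by simp
  define w where "w = matvec (Amat (lt x y z)) u"
  have m: "matvec (Amat (lt x y z')) (\<lambda>j. u (fl 1 j)) j = w (fl 1 j)" if "j < 8" for j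
    unfolding l w_def by (rule MF) (use that lt_lt in auto)
  have "G (Suc n) x y z' (\<lambda>j. u (fl 1 j)) i = G n (x div 2) (y div 2) (z' div 2) (matvec (Amat (lt x y z')) (\<lambda>j. u (fl 1 j))) i" by simp
  also have "\<dots> = G n (x div 2) (y div 2) (2^n - 1 - z div 2) (\<lambda>j. w (fl 1 j)) i"
    unfolding d(1) by (rule Gcong) (use m Suc.prems in auto)
  also have "\<dots> = G n (x div 2) (y div 2) (z div 2) w (fl 1 i)"
    by (rule Suc.IH) (use Suc.prems in auto)
  also have "\<dots> = G (Suc n) x y z u (fl 1 i)" by (simp add: w_def)
  finally show ?case by (simp add: z'_def)
qed

lemma Neg4: "x < 2^n \<Longrightarrow> x \<noteq> 0 \<Longrightarrow> S 4 u \<Longrightarrow> i < 8 \<Longrightarrow> G n (zneg n x) y z u i = G n x y z u (fl 4 i)"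
proof (induction n arbitrary: x y z u i)
  case 0 then show ?case by simp
next
  case (Suc n)
  define w where "w = matvec (Amat (lt x y z)) u"
  show ?case
  proof (cases "even x")
    case True
    have z: "zneg (Suc n) x = 2 * zneg n (x div 2) + 0" using Zeven True Suc.prems by auto
    have d: "zneg (Suc n) x div 2 = zneg n (x div 2)" "zneg (Suc n) x mod 2 = x mod 2"
      using z True by auto
    have l: "lt (zneg (Suc n) x) y z = lt x y z" by (rule lt_cong) (use d in auto)
    have k: "\<not> odd (lt x y z div 4)" using True by (auto simp: lt_def mod2_eq_if)
    have sw: "S 4 w" unfolding w_def by (rule MZ) (use Suc.prems k lt_lt in auto)
    have "G (Suc n) (zneg (Suc n) x) y z u i = G n (zneg n (x div 2)) (y div 2) (z div 2) w i"
      by (simp add: d l w_def)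
    also have "\<dots> = G n (x div 2) (y div 2) (z div 2) w (fl 4 i)"
      by (rule Suc.IH) (use Suc.prems True sw in auto)
    also have "\<dots> = G (Suc n) x y z u (fl 4 i)" by (simp add: w_def)
    finally show ?thesis .
  next
    case False
    have z: "zneg (Suc n) x = 2 * (2^n - 1 - x div 2) + 1" using Zodd False Suc.prems by auto
    have d: "zneg (Suc n) x div 2 = 2^n - 1 - x div 2" "zneg (Suc n) x mod 2 = x mod 2"
      using z False by (auto simp: odd_iff_mod_2_eq_one)
    have l: "lt (zneg (Suc n) x) y z = lt x y z" by (rule lt_cong) (use d in auto)
    have k: "odd (lt x y z div 4)" using False by (auto simp: lt_def mod2_eq_if)
    have inv: "w (fl 4 j) = w j" if "j < 8" for j
      unfolding w_def by (rule MI) (use Suc.prems k lt_lt that in auto)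
    have "G (Suc n) (zneg (Suc n) x) y z u i = G n (2^n - 1 - x div 2) (y div 2) (z div 2) w i"
      by (simp add: d l w_def)
    also have "\<dots> = G n (2^n - 1 - x div 2) (y div 2) (z div 2) (\<lambda>j. w (fl 4 j)) i"
      by (rule Gcong) (use inv Suc.prems in auto)
    also have "\<dots> = G n (x div 2) (y div 2) (z div 2) w (fl 4 i)"
      by (rule CA4) (use Suc.prems in auto)
    also have "\<dots> = G (Suc n) x y z u (fl 4 i)" by (simp add: w_def)
    finally show ?thesis .
  qed
qed

lemma Neg2: "y < 2^n \<Longrightarrow> y \<noteq> 0 \<Longrightarrow> S 2 u \<Longrightarrow> i < 8 \<Longrightarrow> G n x (zneg n y) z u i = G n x y z u (fl 2 i)"
proof (induction n arbitrary: x y z u i)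
  case 0 then show ?case by simp
next
  case (Suc n)
  define w where "w = matvec (Amat (lt x y z)) u"
  show ?case
  proof (cases "even y")
    case True
    have z: "zneg (Suc n) y = 2 * zneg n (y div 2) + 0" using Zeven True Suc.prems by auto
    have d: "zneg (Suc n) y div 2 = zneg n (y div 2)" "zneg (Suc n) y mod 2 = y mod 2"
      using z True by auto
    have l: "lt x (zneg (Suc n) y) z = lt x y z" by (rule lt_cong) (use d in auto)
    have k: "\<not> odd (lt x y z div 2)" using True by (auto simp: lt_def mod2_eq_if)
    have sw: "S 2 w" unfolding w_def by (rule MZ) (use Suc.prems k lt_lt in auto)
    have "G (Suc n) x (zneg (Suc n) y) z u i = G n (x div 2) (zneg n (y div 2)) (z div 2) w i"
      by (simp add: d l w_def)
    also have "\<dots> = G n (x div 2) (y div 2) (z div 2) w (fl 2 i)"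
      by (rule Suc.IH) (use Suc.prems True sw in auto)
    also have "\<dots> = G (Suc n) x y z u (fl 2 i)" by (simp add: w_def)
    finally show ?thesis .
  next
    case False
    have z: "zneg (Suc n) y = 2 * (2^n - 1 - y div 2) + 1" using Zodd False Suc.prems by auto
    have d: "zneg (Suc n) y div 2 = 2^n - 1 - y div 2" "zneg (Suc n) y mod 2 = y mod 2"
      using z False by (auto simp: odd_iff_mod_2_eq_one)
    have l: "lt x (zneg (Suc n) y) z = lt x y z" by (rule lt_cong) (use d in auto)
    have k: "odd (lt x y z div 2)" using False by (auto simp: lt_def mod2_eq_if)
    have inv: "w (fl 2 j) = w j" if "j < 8" for j
      unfolding w_def by (rule MI) (use Suc.prems k lt_lt that in auto)
    have "G (Suc n) x (zneg (Suc n) y) z u i = G n (x div 2) (2^n - 1 - y div 2) (z div 2) w i"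
      by (simp add: d l w_def)
    also have "\<dots> = G n (x div 2) (2^n - 1 - y div 2) (z div 2) (\<lambda>j. w (fl 2 j)) i"
      by (rule Gcong) (use inv Suc.prems in auto)
    also have "\<dots> = G n (x div 2) (y div 2) (z div 2) w (fl 2 i)"
      by (rule CA2) (use Suc.prems in auto)
    also have "\<dots> = G (Suc n) x y z u (fl 2 i)" by (simp add: w_def)
    finally show ?thesis .
  qed
qed

lemma Neg1: "z < 2^n \<Longrightarrow> z \<noteq> 0 \<Longrightarrow> S 1 u \<Longrightarrow> i < 8 \<Longrightarrow> G n x y (zneg n z) u i = G n x y z u (fl 1 i)"
proof (induction n arbitrary: x y z u i)
  case 0 then show ?case by simp
next
  case (Suc n)
  define w where "w = matvec (Amat (lt x y z)) u"
  show ?case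
  proof (cases "even z")
    case True
    have z: "zneg (Suc n) z = 2 * zneg n (z div 2) + 0" using Zeven True Suc.prems by auto
    have d: "zneg (Suc n) z div 2 = zneg n (z div 2)" "zneg (Suc n) z mod 2 = z mod 2"
      using z True by auto
    have l: "lt x y (zneg (Suc n) z) = lt x y z" by (rule lt_cong) (use d in auto)
    have k: "\<not> odd (lt x y z div 1)" using True by (auto simp: lt_def mod2_eq_if)
    have sw: "S 1 w" unfolding w_def by (rule MZ) (use Suc.prems k lt_lt in auto)
    have "G (Suc n) x y (zneg (Suc n) z) u i = G n (x div 2) (y div 2) (zneg n (z div 2)) w i"
      by (simp add: d l w_def)
    also have "\<dots> = G n (x div 2) (y div 2) (z div 2) w (fl 1 i)"
      by (rule Suc.IH) (use Suc.prems True sw in auto)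
    also have "\<dots> = G (Suc n) x y z u (fl 1 i)" by (simp add: w_def)
    finally show ?thesis .
  next
    case False
    have z: "zneg (Suc n) z = 2 * (2^n - 1 - z div 2) + 1" using Zodd False Suc.prems by auto
    have d: "zneg (Suc n) z div 2 = 2^n - 1 - z div 2" "zneg (Suc n) z mod 2 = z mod 2"
      using z False by (auto simp: odd_iff_mod_2_eq_one)
    have l: "lt x y (zneg (Suc n) z) = lt x y z" by (rule lt_cong) (use d in auto)
    have k: "odd (lt x y z div 1)" using False by (auto simp: lt_def mod2_eq_if)
    have inv: "w (fl 1 j) = w j" if "j < 8" for j
      unfolding w_def by (rule MI) (use Suc.prems k lt_lt that in auto)
    have "G (Suc n) x y (zneg (Suc n) z) u i = G n (x div 2) (y div 2) (2^n - 1 - z div 2) w i"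
      by (simp add: d l w_def)
    also have "\<dots> = G n (x div 2) (y div 2) (2^n - 1 - z div 2) (\<lambda>j. w (fl 1 j)) i"
      by (rule Gcong) (use inv Suc.prems in auto)
    also have "\<dots> = G n (x div 2) (y div 2) (z div 2) w (fl 1 i)"
      by (rule CA1) (use Suc.prems in auto)
    also have "\<dots> = G (Suc n) x y z u (fl 1 i)" by (simp add: w_def)
    finally show ?thesis .
  qed
qed

lemma SZ4: "S 4 u \<Longrightarrow> S 4 (G n 0 y z u)"
proof (induction n arbitrary: x y z u)
  case 0 then show ?case by simp
next
  case (Suc n)
  have "S 4 (matvec (Amat (lt 0 y z)) u)" by (rule MZ) (use Suc.prems lt_lt in \<open>auto simp: lt_def mod2_eq_if\<close>)
  then show ?case using Suc.IH by simp
qed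

lemma SZ2: "S 2 u \<Longrightarrow> S 2 (G n x 0 z u)"
proof (induction n arbitrary: x y z u)
  case 0 then show ?case by simp
next
  case (Suc n)
  have "S 2 (matvec (Amat (lt x 0 z)) u)" by (rule MZ) (use Suc.prems lt_lt in \<open>auto simp: lt_def mod2_eq_if\<close>)
  then show ?case using Suc.IH by simp
qed

lemma SZ1: "S 1 u \<Longrightarrow> S 1 (G n x y 0 u)"
proof (induction n arbitrary: x y z u)
  case 0 then show ?case by simp
next
  case (Suc n)
  have "S 1 (matvec (Amat (lt x y 0)) u)" by (rule MZ) (use Suc.prems lt_lt in \<open>auto simp: lt_def mod2_eq_if\<close>)
  then show ?case using Suc.IH by simp
qed

lemma SW: "i < 8 \<Longrightarrow> G n y x z (\<lambda>j. u (sg j)) i = G n x y z u (sg i)"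
proof (induction n arbitrary: x y z u i)
  case 0 then show ?case by simp
next
  case (Suc n)
  define w where "w = matvec (Amat (lt x y z)) u"
  have eq: "lt y x z = sg (lt x y z)" by (rule lt_fl(4))
  have m: "matvec (Amat (lt y x z)) (\<lambda>j. u (sg j)) j = w (sg j)" if "j < 8" for j
    unfolding eq w_def by (rule MS) (use that lt_lt in auto)
  have "G (Suc n) y x z (\<lambda>j. u (sg j)) i = G n (y div 2) (x div 2) (z div 2) (matvec (Amat (lt y x z)) (\<lambda>j. u (sg j))) i" by simp
  also have "\<dots> = G n (y div 2) (x div 2) (z div 2) (\<lambda>j. w (sg j)) i"
    by (rule Gcong) (use m Suc.prems in auto)
  also have "\<dots> = G n (x div 2) (y div 2) (z div 2) w (sg i)"
    by (rule Suc.IH) (use Suc.prems in auto)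
  also have "\<dots> = G (Suc n) x y z u (sg i)" by (simp add: w_def)
  finally show ?case .
qed

lemma S_e0: "S t e0" unfolding S_def e0_def by auto



lemma xbit_Suc: "i < n \<Longrightarrow> xbit (Suc n) x i = xbit n (x div 2) i"
proof -
  assume "i < n"
  then have "Suc n - 1 - i = Suc (n - 1 - i)" by simp
  then show ?thesis unfolding xbit_def by (simp add: bit_Suc)
qed

lemma xbit_last: "xbit (Suc n) x n = x mod 2"
  unfolding xbit_def by (simp add: bit_0 mod2_eq_if)

lemma omega_last: "omega (Suc n) x y z n = lt x y z"
  unfolding omega_def lt_def by (simp add: xbit_last)

lemma PGf: "foldr (\<lambda>k v. matvec (Amat k) v) (map (omega n x y z) [0..<n]) u = G n x y z u"
proof (induction n arbitrary: x y z u)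
  case 0 then show ?case by simp
next
  case (Suc n)
  have e: "map (omega (Suc n) x y z) [0..<n] = map (omega n (x div 2) (y div 2) (z div 2)) [0..<n]"
    by (rule map_cong) (auto simp: omega_def xbit_Suc)
  have "foldr (\<lambda>k v. matvec (Amat k) v) (map (omega (Suc n) x y z) [0..<Suc n]) u
     = foldr (\<lambda>k v. matvec (Amat k) v) (map (omega (Suc n) x y z) [0..<n]) (matvec (Amat (lt x y z)) u)"
    by (simp add: omega_last)
  also have "\<dots> = foldr (\<lambda>k v. matvec (Amat k) v) (map (omega n (x div 2) (y div 2) (z div 2)) [0..<n]) (matvec (Amat (lt x y z)) u)"
    by (simp only: e)
  also have "\<dots> = G n (x div 2) (y div 2) (z div 2) (matvec (Amat (lt x y z)) u)" by (rule Suc.IH)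
  finally show ?case by simp
qed

lemma PG: "prodvec n x y z = G n x y z e0"
  unfolding prodvec_def by (rule PGf)

lemma BT1: "p < m \<Longrightarrow> bit (((x::nat) + 2^m) mod 2^Suc m) p = bit x p"
proof -
  assume a: "p < m"
  have "(x + 2^m) div 2^p = x div 2^p + 2^(m-p)"
  proof -
    have "(2::nat)^m = 2^(m-p) * 2^p" using a by (simp add: power_add[symmetric])
    then show ?thesis by simp
  qed
  moreover have "even ((2::nat)^(m-p))" using a by simp
  ultimately have "bit (x + 2^m) p = bit x p" by (simp add: bit_iff_odd)
  then show ?thesis using a unfolding take_bit_eq_mod[symmetric] bit_take_bit_iff by simp
qed

lemma BT2: "bit (((x::nat) + 2^m) mod 2^Suc m) m = (\<not> bit x m)"
proof -
  have "(x + 2^m) div 2^m = x div 2^m + 1" by simp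
  then have "bit (x + 2^m) m = (\<not> bit x m)" by (simp add: bit_iff_odd)
  then show ?thesis unfolding take_bit_eq_mod[symmetric] bit_take_bit_iff by simp
qed

lemma omega_lt: "omega n x y z i < 8"
  unfolding omega_def xbit_def by auto

lemma flip_top: "a < 2 \<Longrightarrow> b < 2 \<Longrightarrow> c < 2 \<Longrightarrow> 4*(1-a)+2*(1-b)+c = fl 2 (fl 4 (4*a+2*b+c))"
  unfolding less2 fl_def by auto

lemma cadp_top: assumes "c < 2" "x < 2^n" "y < 2^n"
  shows "cadp n c (zadd n x (2^(n-1))) (zadd n y (2^(n-1))) z = cadp n c x y z"
proof (cases n)
  case 0
  then have "x = 0" "y = 0" using assms by auto
  then show ?thesis using 0 by (simp add: zadd_def)
next
  case (Suc m)
  define x' where "x' = zadd n x (2^(n-1))"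
  define y' where "y' = zadd n y (2^(n-1))"
  have x': "x' = (x + 2^m) mod 2^Suc m" "y' = (y + 2^m) mod 2^Suc m"
    unfolding x'_def y'_def zadd_def Suc by simp_all
  have up: "[0..<Suc m] = 0 # [1..<Suc m]" using upt_conv_Cons[of 0 "Suc m"] by simp
  have rest: "map (omega n x' y' z) [1..<Suc m] = map (omega n x y z) [1..<Suc m]"
  proof (rule map_cong)
    fix i assume "i \<in> set [1..<Suc m]"
    then have i: "1 \<le> i" "i < Suc m" by auto
    have "xbit n x' i = xbit n x i" "xbit n y' i = xbit n y i"
      unfolding xbit_def x' Suc using i BT1[of "m - i" m] by auto
    then show "omega n x' y' z i = omega n x y z i" unfolding omega_def by simp
  qed simp
  have top: "omega n x' y' z 0 = fl 2 (fl 4 (omega n x y z 0))"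
  proof -
    have "xbit n x' 0 = 1 - xbit n x 0" "xbit n y' 0 = 1 - xbit n y 0"
      unfolding xbit_def x' Suc using BT2 by auto
    moreover have "xbit n x 0 < 2" "xbit n y 0 < 2" "xbit n z 0 < 2" unfolding xbit_def by auto
    ultimately show ?thesis unfolding omega_def by (simp add: flip_top)
  qed
  have up': "[0..<n] = 0 # [1..<Suc m]" using up Suc by simp
  have pv: "prodvec n a b z = matvec (Amat (omega n a b z 0)) (foldr (\<lambda>k v. matvec (Amat k) v) (map (omega n a b z) [1..<Suc m]) e0)" for a b
    unfolding prodvec_def up' by (simp del: upt_Suc)
  define R where "R = foldr (\<lambda>k v. matvec (Amat k) v) (map (omega n x y z) [1..<Suc m]) e0"
  have p1: "prodvec n x y z = matvec (Amat (omega n x y z 0)) R"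
    unfolding R_def by (rule pv)
  have p2: "prodvec n x' y' z = matvec (Amat (fl 2 (fl 4 (omega n x y z 0)))) R"
    unfolding R_def pv[of x' y'] rest top ..
  show ?thesis
    unfolding cadp_def x'_def[symmetric] y'_def[symmetric] p1 p2 using M6 omega_lt assms(1) by blast
qed


lemma zneg0: "zneg n 0 = 0" unfolding zneg_def by simp

lemma pv_neg4: "x < 2^n \<Longrightarrow> x \<noteq> 0 \<Longrightarrow> j < 8 \<Longrightarrow> prodvec n (zneg n x) y z j = prodvec n x y z (fl 4 j)"
  unfolding PG by (rule Neg4) (auto simp: S_e0)
lemma pv_neg2: "y < 2^n \<Longrightarrow> y \<noteq> 0 \<Longrightarrow> j < 8 \<Longrightarrow> prodvec n x (zneg n y) z j = prodvec n x y z (fl 2 j)"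
  unfolding PG by (rule Neg2) (auto simp: S_e0)
lemma pv_neg1: "z < 2^n \<Longrightarrow> z \<noteq> 0 \<Longrightarrow> j < 8 \<Longrightarrow> prodvec n x y (zneg n z) j = prodvec n x y z (fl 1 j)"
  unfolding PG by (rule Neg1) (auto simp: S_e0)

lemma e0_sg: "j < 8 \<Longrightarrow> e0 j = e0 (sg j)"
proof -
  have "\<forall>j<8. e0 j = e0 (sg j)" unfolding all8 by (simp add: e0_def sg_def)
  then show "j < 8 \<Longrightarrow> e0 j = e0 (sg j)" by blast
qed

lemma pv_sw: "j < 8 \<Longrightarrow> prodvec n y x z j = prodvec n x y z (sg j)"
proof -
  assume j: "j < 8"
  have "G n y x z e0 j = G n y x z (\<lambda>i. e0 (sg i)) j" by (rule Gcong) (use j e0_sg in auto)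
  also have "\<dots> = G n x y z e0 (sg j)" by (rule SW) (use j in auto)
  finally show ?thesis unfolding PG .
qed

lemma cadp_neg4: "c < 2 \<Longrightarrow> x < 2^n \<Longrightarrow> cadp n c (zneg n x) y z = cadp n c x y z"
proof (cases "x = 0")
  case True then show ?thesis by (simp add: zneg0)
next
  case False
  assume a: "c < 2" "x < 2^n"
  have "cadp n c (zneg n x) y z = (\<Sum>j<8. Lc c ! j * prodvec n x y z (fl 4 j))"
    unfolding cadp_def by (rule sum.cong) (use a False pv_neg4 in auto)
  also have "\<dots> = cadp n c x y z" unfolding cadp_def using VF(1)[of 0 0 c] a by simp
  finally show ?thesis .
qed

lemma cadp_neg2: "c < 2 \<Longrightarrow> y < 2^n \<Longrightarrow> cadp n c x (zneg n y) z = cadp n c x y z"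
proof (cases "y = 0")
  case True then show ?thesis by (simp add: zneg0)
next
  case False
  assume a: "c < 2" "y < 2^n"
  have "cadp n c x (zneg n y) z = (\<Sum>j<8. Lc c ! j * prodvec n x y z (fl 2 j))"
    unfolding cadp_def by (rule sum.cong) (use a False pv_neg2 in auto)
  also have "\<dots> = cadp n c x y z" unfolding cadp_def using VF(2)[of 0 0 c] a by simp
  finally show ?thesis .
qed

lemma cadp_neg1: "c < 2 \<Longrightarrow> z < 2^n \<Longrightarrow> z \<noteq> 0 \<Longrightarrow> cadp n (xor c 1) x y (zneg n z) = cadp n c x y z"
proof -
  assume a: "c < 2" "z < 2^n" "z \<noteq> 0"
  have "cadp n (xor c 1) x y (zneg n z) = (\<Sum>j<8. Lc (xor c 1) ! j * prodvec n x y z (fl 1 j))"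
    unfolding cadp_def by (rule sum.cong) (use a pv_neg1 in auto)
  also have "\<dots> = cadp n c x y z" unfolding cadp_def using VF(3)[of 0 0 c] a by simp
  finally show ?thesis .
qed

lemma cadp_sw: "c < 2 \<Longrightarrow> cadp n c y x z = cadp n c x y z"
proof -
  assume a: "c < 2"
  have "cadp n c y x z = (\<Sum>j<8. Lc c ! j * prodvec n x y z (sg j))"
    unfolding cadp_def by (rule sum.cong) (use pv_sw in auto)
  also have "\<dots> = cadp n c x y z" unfolding cadp_def using VF(4)[of 0 0 c] a by simp
  finally show ?thesis .
qed

lemma padp_neg1: "a < 2 \<Longrightarrow> b < 2 \<Longrightarrow> z < 2^n \<Longrightarrow> padp n a b x y (zneg n z) = padp n a b x y z"
proof (cases "z = 0")
  case True then show ?thesis by (simp add: zneg0)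
next
  case False
  assume h: "a < 2" "b < 2" "z < 2^n"
  have "padp n a b x y (zneg n z) = (\<Sum>j<8. Lab a b ! j * prodvec n x y z (fl 1 j))"
    unfolding padp_def by (rule sum.cong) (use h False pv_neg1 in auto)
  also have "\<dots> = padp n a b x y z" unfolding padp_def using VF(5)[of a b 0] h by simp
  finally show ?thesis .
qed

lemma padp_neg4: "a < 2 \<Longrightarrow> b < 2 \<Longrightarrow> x < 2^n \<Longrightarrow> x \<noteq> 0 \<Longrightarrow> padp n a b (zneg n x) y z = padp n (xor a 1) b x y z"
proof -
  assume h: "a < 2" "b < 2" "x < 2^n" "x \<noteq> 0"
  have "padp n a b (zneg n x) y z = (\<Sum>j<8. Lab a b ! j * prodvec n x y z (fl 4 j))"
    unfolding padp_def by (rule sum.cong) (use h pv_neg4 in auto)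
  also have "\<dots> = padp n (xor a 1) b x y z" unfolding padp_def using VF(6)[of a b 0] h by simp
  finally show ?thesis .
qed

lemma padp_neg2: "a < 2 \<Longrightarrow> b < 2 \<Longrightarrow> y < 2^n \<Longrightarrow> y \<noteq> 0 \<Longrightarrow> padp n a b x (zneg n y) z = padp n a (xor b 1) x y z"
proof -
  assume h: "a < 2" "b < 2" "y < 2^n" "y \<noteq> 0"
  have "padp n a b x (zneg n y) z = (\<Sum>j<8. Lab a b ! j * prodvec n x y z (fl 2 j))"
    unfolding padp_def by (rule sum.cong) (use h pv_neg2 in auto)
  also have "\<dots> = padp n a (xor b 1) x y z" unfolding padp_def using VF(7)[of a b 0] h by simp
  finally show ?thesis .
qed

lemma zeros:
  "padp n 1 b 0 y z = 0" "padp n a 1 x 0 z = 0" "cadp n 1 x y 0 = 0"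
proof -
  show "padp n 1 b 0 y z = 0" unfolding padp_def PG by (rule VZ(1)) (rule SZ4, rule S_e0)
  show "padp n a 1 x 0 z = 0" unfolding padp_def PG by (rule VZ(2)) (rule SZ2, rule S_e0)
  show "cadp n 1 x y 0 = 0" unfolding cadp_def PG by (rule VZ(3)) (rule SZ1, rule S_e0)
qed

theorem theorem4:
  fixes n \<alpha> \<beta> \<gamma> a b c :: nat
  assumes "\<alpha> < 2^n" and "\<beta> < 2^n" and "\<gamma> < 2^n"
    and "a < 2" and "b < 2" and "c < 2"
  shows
   "(cadp n c \<alpha> \<beta> \<gamma> = cadp n c \<beta> \<alpha> \<gamma> \<and>
     cadp n c \<beta> \<alpha> \<gamma> = cadp n c (zadd n \<alpha> (2^(n-1))) (zadd n \<beta> (2^(n-1))) \<gamma>) \<and>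
    (cadp n c \<alpha> \<beta> \<gamma> = cadp n c (zneg n \<alpha>) \<beta> \<gamma> \<and>
     cadp n c (zneg n \<alpha>) \<beta> \<gamma> = cadp n c \<alpha> (zneg n \<beta>) \<gamma>) \<and>
    (\<gamma> \<noteq> 0 \<longrightarrow> cadp n c \<alpha> \<beta> \<gamma> = cadp n (xor c 1) \<alpha> \<beta> (zneg n \<gamma>)) \<and>
    padp n a b \<alpha> \<beta> \<gamma> = padp n a b \<alpha> \<beta> (zneg n \<gamma>) \<and>
    (\<alpha> \<noteq> 0 \<longrightarrow> padp n a b (zneg n \<alpha>) \<beta> \<gamma> = padp n (xor a 1) b \<alpha> \<beta> \<gamma>) \<and>
    (\<beta> \<noteq> 0 \<longrightarrow> padp n a b \<alpha> (zneg n \<beta>) \<gamma> = padp n a (xor b 1) \<alpha> \<beta> \<gamma>) \<and>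
    (padp n 1 b 0 \<beta> \<gamma> = 0 \<and> padp n a 1 \<alpha> 0 \<gamma> = 0 \<and> cadp n 1 \<alpha> \<beta> 0 = 0)"
  using assms cadp_sw[of c n \<alpha> \<beta> \<gamma>] cadp_top[of c \<alpha> n \<beta> \<gamma>]
    cadp_neg4[of c \<alpha> n \<beta> \<gamma>] cadp_neg2[of c \<beta> n \<alpha> \<gamma>] cadp_neg1[of c \<gamma> n \<alpha> \<beta>]
    padp_neg1[of a b \<gamma> n \<alpha> \<beta>] padp_neg4[of a b \<alpha> n \<beta> \<gamma>] padp_neg2[of a b \<beta> n \<alpha> \<gamma>]
    zeros
  by auto

end
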